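(* Let $B\subset\Delta^{re}_+$ and let $\preceq$ be a total order on $B$ satisfying condition CO(ii): whenever $\beta\in B$, $\gamma\in\Delta_+\setminus B$ and $\beta+\gamma\in B$, then $\beta\prec\beta+\gamma$. Then: (1) If $m\delta+\varepsilon$ and $(m+k)\delta+\varepsilon$ both lie in $B$, where $m\in\mathbb Z_{\ge0}$, $k\in\mathbb N$ and $\varepsilon\in\mathring\Delta$, then $m\delta+\varepsilon\prec(m+k)\delta+\varepsilon$. (2) $\preceq$ is a well-order on $B$. (3) If $B=\langle P\rangle$ for some $P\subset\mathring\Delta$, then $B$ has no maximum element with respect to $\preceq$.
   Context: Let $\Delta$ be the root system of an untwisted affine Lie algebra, with null root $\delta$. Let $\mathring\Delta$ be the finite (classical) root system of the underlying finite-dimensional simple Lie algebra. Let $\mathring\Delta_+$ be its positive roots and $\mathring\Delta_-=-\mathring\Delta_+$. Write $\mathbb N=\{1,2,\dots\}$. The positive roots are $\Delta_+=\Delta^{re}_+\amalg\Delta^{im}_+$, where $\Delta^{im}_+=\{n\delta:n\in\mathbb N\}$ and $\Delta^{re}_+=\{m\delta+\varepsilon: m\in\mathbb Z_{\geq 0},\varepsilon\in\mathring\Delta_+\}\cup\{m\delta+\varepsilon: m\in\mathbb N,\varepsilon\in\mathring\Delta_-\}$. For $\varepsilon\in\mathring\Delta$, put $\langle\varepsilon\rangle=\{m\delta+\varepsilon: m\in\mathbb Z_{\ge0}\}\cap\Delta_+$. For $P\subset\mathring\Delta$, put $\langle P\rangle=\bigcup_{\varepsilon\in P}\langle\varepsilon\rangle$.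 *)

theory Defs
  imports "HOL-Analysis.Analysis"
begin

definition root_system :: "'a::euclidean_space set \<Rightarrow> bool" where
  "root_system R \<longleftrightarrow>
     finite R \<and> 0 \<notin> R \<and> span R = UNIV \<and>
     (\<forall>\<alpha>\<in>R. \<forall>\<beta>\<in>R. \<beta> - (2 * (\<beta> \<bullet> \<alpha>) / (\<alpha> \<bullet> \<alpha>)) *\<^sub>R \<alpha> \<in> R) \<and>
     (\<forall>\<alpha>\<in>R. \<forall>\<beta>\<in>R. 2 * (\<beta> \<bullet> \<alpha>) / (\<alpha> \<bullet> \<alpha>) \<in> \<int>) \<and>
     (\<forall>\<alpha>\<in>R. \<forall>c::real. c *\<^sub>R \<alpha> \<in> R \<longrightarrow> c = 1 \<or> c = -1) \<and>
     \<not> (\<exists>R1 R2. R1 \<noteq> {} \<and> R2 \<noteq> {} \<and> R1 \<union> R2 = R \<and>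
           (\<forall>a\<in>R1. \<forall>b\<in>R2. a \<bullet> b = 0))"

text \<open>A positive system is determined by a regular element rho (no root orthogonal to rho).\<close>
definition regular :: "'a::euclidean_space set \<Rightarrow> 'a \<Rightarrow> bool" where
  "regular R \<rho> \<longleftrightarrow> (\<forall>\<alpha>\<in>R. \<alpha> \<bullet> \<rho> \<noteq> 0)"

definition fin_pos :: "'a::euclidean_space set \<Rightarrow> 'a \<Rightarrow> 'a set" where
  "fin_pos R \<rho> = {\<alpha>\<in>R. \<alpha> \<bullet> \<rho> > 0}"

definition fin_neg :: "'a::euclidean_space set \<Rightarrow> 'a \<Rightarrow> 'a set" where
  "fin_neg R \<rho> = uminus ` fin_pos R \<rho>"

text \<open>An element m\<delta>+\<epsilon> of the affine root lattice is encoded as the pair (\<epsilon>, m).\<close>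
definition aff_add :: "'a::euclidean_space \<times> int \<Rightarrow> 'a \<times> int \<Rightarrow> 'a \<times> int" where
  "aff_add x y = (fst x + fst y, snd x + snd y)"

definition re_pos :: "'a::euclidean_space set \<Rightarrow> 'a \<Rightarrow> ('a \<times> int) set" where
  "re_pos R \<rho> = {(\<epsilon>, m) | \<epsilon> m. (m \<ge> 0 \<and> \<epsilon> \<in> fin_pos R \<rho>) \<or> (m \<ge> 1 \<and> \<epsilon> \<in> fin_neg R \<rho>)}"

definition im_pos :: "('a::euclidean_space \<times> int) set" where
  "im_pos = {(0, n) | n. n \<ge> 1}"

definition aff_pos :: "'a::euclidean_space set \<Rightarrow> 'a \<Rightarrow> ('a \<times> int) set" where
  "aff_pos R \<rho> = re_pos R \<rho> \<union> im_pos"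

definition angle :: "'a::euclidean_space set \<Rightarrow> 'a \<Rightarrow> 'a \<Rightarrow> ('a \<times> int) set" where
  "angle R \<rho> \<epsilon> = {(\<epsilon>, m) | m. m \<ge> 0} \<inter> aff_pos R \<rho>"

definition angle_set :: "'a::euclidean_space set \<Rightarrow> 'a \<Rightarrow> 'a set \<Rightarrow> ('a \<times> int) set" where
  "angle_set R \<rho> P = (\<Union>\<epsilon>\<in>P. angle R \<rho> \<epsilon>)"

end

theory Submission
  imports Defs
begin

lemma finite_lin_min:
  assumes "finite C" "C \<noteq> {}" "C \<subseteq> B" "linear_order_on B r"
  shows "\<exists>c\<in>C. \<forall>y\<in>C. (c, y) \<in> r"
  using assms
proof (induction C rule: finite_ne_induct)
  case (singleton x)
  then show ?case using assms(4) unfolding order_on_defs refl_on_def by auto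
next
  case (insert x F)
  then obtain c where c: "c \<in> F" "\<forall>y\<in>F. (c, y) \<in> r" by auto
  have xB: "x \<in> B" "c \<in> B" using insert c by auto
  have tot: "total_on B r" "trans r" "refl_on B r" using insert(6) unfolding order_on_defs by auto
  show ?case
  proof (cases "(c, x) \<in> r")
    case True thus ?thesis using c tot(3) xB unfolding refl_on_def by auto
  next
    case False
    then have "(x, c) \<in> r" using tot(1,3) xB unfolding total_on_def refl_on_def by metis
    then have "\<forall>y\<in>insert x F. (x, y) \<in> r" using c tot(2,3) xB unfolding refl_on_def trans_def by blast
    thus ?thesis by auto
  qed
qed

theorem lemma7p4:
  fixes R :: "'a::euclidean_space set" and \<rho> :: 'a
    and B :: "('a \<times> int) set" and r :: "(('a \<times> int) \<times> ('a \<times> int)) set"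
  assumes rs: "root_system R" and reg: "regular R \<rho>"
    and B_sub: "B \<subseteq> re_pos R \<rho>"
    and lin: "linear_order_on B r"
    and CO2: "\<And>\<beta> \<gamma>. \<beta> \<in> B \<Longrightarrow> \<gamma> \<in> aff_pos R \<rho> - B \<Longrightarrow> aff_add \<beta> \<gamma> \<in> B \<Longrightarrow>
                (\<beta>, aff_add \<beta> \<gamma>) \<in> r \<and> \<beta> \<noteq> aff_add \<beta> \<gamma>"
  shows "(\<forall>\<epsilon> m k. \<epsilon> \<in> R \<and> m \<ge> 0 \<and> k \<ge> 1 \<and> (\<epsilon>, m) \<in> B \<and> (\<epsilon>, m + k) \<in> B \<longrightarrow>
            ((\<epsilon>, m), (\<epsilon>, m + k)) \<in> r \<and> (\<epsilon>, m) \<noteq> (\<epsilon>, m + k))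
       \<and> well_order_on B r
       \<and> (\<forall>P. P \<subseteq> R \<and> B = angle_set R \<rho> P \<longrightarrow> \<not> (\<exists>\<beta>\<in>B. \<forall>\<gamma>\<in>B. (\<gamma>, \<beta>) \<in> r))"
proof -
  have fin: "finite R" and z: "0 \<notin> R" using rs unfolding root_system_def by auto
  have rB: "r \<subseteq> B \<times> B" and trr: "trans r" and antis: "antisym r" and refl: "refl_on B r"
    and tot: "total_on B r"
    using lin unfolding order_on_defs by auto
  have nonneg: "\<And>e m. (e, m) \<in> B \<Longrightarrow> m \<ge> 0" using B_sub unfolding re_pos_def by auto
  have P1: "\<And>e m k. k \<ge> 1 \<Longrightarrow> (e, m) \<in> B \<Longrightarrow> (e, m + k) \<in> B \<Longrightarrow> ((e, m), (e, m + k)) \<in> r"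
  proof -
    fix e m and k :: int
    assume k: "k \<ge> 1" and a: "(e, m) \<in> B" "(e, m + k) \<in> B"
    have g1: "(0, k) \<in> aff_pos R \<rho>" using k unfolding aff_pos_def im_pos_def by auto
    have g2: "(0, k) \<notin> B"
    proof
      assume "(0, k) \<in> B"
      then have "(0, k) \<in> re_pos R \<rho>" using B_sub by auto
      then show False using z unfolding re_pos_def fin_pos_def fin_neg_def by auto
    qed
    have "aff_add (e, m) (0, k) = (e, m + k)" unfolding aff_add_def by simp
    then show "((e, m), (e, m + k)) \<in> r" using CO2[of "(e, m)" "(0, k)"] g1 g2 a by auto
  qed
  have part1: "\<forall>\<epsilon> m k. \<epsilon> \<in> R \<and> m \<ge> 0 \<and> k \<ge> 1 \<and> (\<epsilon>, m) \<in> B \<and> (\<epsilon>, m + k) \<in> B \<longrightarrow>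
            ((\<epsilon>, m), (\<epsilon>, m + k)) \<in> r \<and> (\<epsilon>, m) \<noteq> (\<epsilon>, m + k)"
    using P1 by auto
  have le: "\<And>e m m'. m \<le> m' \<Longrightarrow> (e, m) \<in> B \<Longrightarrow> (e, m') \<in> B \<Longrightarrow> ((e, m), (e, m')) \<in> r"
  proof -
    fix e m m'
    assume "m \<le> (m'::int)" "(e, m) \<in> B" "(e, m') \<in> B"
    then show "((e, m), (e, m')) \<in> r"
      using P1[of "m' - m" e m] refl unfolding refl_on_def
      by (cases "m = m'") auto
  qed
  have finE: "finite (fst ` B)"
  proof (rule finite_subset)
    show "fst ` B \<subseteq> R \<union> uminus ` R"
      using B_sub unfolding re_pos_def fin_pos_def fin_neg_def by auto
    show "finite (R \<union> uminus ` R)" using fin by auto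
  qed
  have wf: "wf (r - Id)"
  proof (rule wfI_min)
    fix x :: "'a \<times> int" and Q
    assume xQ: "x \<in> Q"
    show "\<exists>z\<in>Q. \<forall>y. (y, z) \<in> r - Id \<longrightarrow> y \<notin> Q"
    proof (cases "Q \<inter> B = {}")
      case True
      then show ?thesis using xQ rB by blast
    next
      case False
      define S where "S = Q \<inter> B"
      define n where "n = (\<lambda>e. LEAST k::nat. (e, int k) \<in> S)"
      have nS: "\<And>e m. (e, m) \<in> S \<Longrightarrow> (e, int (n e)) \<in> S \<and> n e \<le> nat m"
      proof -
        fix e m assume a: "(e, m) \<in> S"
        then have m0: "m \<ge> 0" using nonneg S_def by auto
        then have "(e, int (nat m)) \<in> S" using a by simp
        then show "(e, int (n e)) \<in> S \<and> n e \<le> nat m"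
          unfolding n_def by (metis (mono_tags, lifting) LeastI Least_le)
      qed
      define C where "C = (\<lambda>e. (e, int (n e))) ` fst ` S"
      have C1: "finite C" using finE unfolding C_def S_def by (meson finite_imageI finite_subset image_mono inf_le2)
      have C2: "C \<noteq> {}" using False unfolding C_def S_def by auto
      have C3: "C \<subseteq> S" unfolding C_def using nS by force
      then have C4: "C \<subseteq> B" unfolding S_def by auto
      obtain c where c: "c \<in> C" "\<forall>y\<in>C. (c, y) \<in> r" using finite_lin_min[OF C1 C2 C4 lin] by blast
      have "\<forall>y. (y, c) \<in> r - Id \<longrightarrow> y \<notin> Q"
      proof (intro allI impI notI)
        fix y assume yc: "(y, c) \<in> r - Id" and yQ: "y \<in> Q"
        then have yB: "y \<in> B" using rB by auto
        obtain e m where y: "y = (e, m)" by fastforce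
        have yS: "(e, m) \<in> S" using yB yQ y S_def by auto
        then have m0: "m \<ge> 0" using nonneg S_def by auto
        have "(e, int (n e)) \<in> C" unfolding C_def using yS by force
        then have cr: "(c, (e, int (n e))) \<in> r" using c by auto
        have "((e, int (n e)), y) \<in> r" using le[of "int (n e)" m e] nS[OF yS] m0 yS y S_def by auto
        then have "(c, y) \<in> r" using cr trr unfolding trans_def by blast
        then have "y = c" using yc antis by (meson DiffD1 antisymD)
        then show False using yc by auto
      qed
      moreover have "c \<in> Q" using c C3 S_def by auto
      ultimately show ?thesis by blast
    qed
  qed
  have part2: "well_order_on B r" using lin wf unfolding well_order_on_def by auto
  have part3: "\<forall>P. P \<subseteq> R \<and> B = angle_set R \<rho> P \<longrightarrow> \<not> (\<exists>\<beta>\<in>B. \<forall>\<gamma>\<in>B. (\<gamma>, \<beta>) \<in> r)"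
  proof (intro allI impI notI)
    fix P assume PB: "P \<subseteq> R \<and> B = angle_set R \<rho> P"
    assume "\<exists>\<beta>\<in>B. \<forall>\<gamma>\<in>B. (\<gamma>, \<beta>) \<in> r"
    then obtain e m where b: "(e, m) \<in> B" and mx: "\<forall>\<gamma>\<in>B. (\<gamma>, (e, m)) \<in> r" by auto
    have eP: "e \<in> P" and m0: "m \<ge> 0" and ap: "(e, m) \<in> aff_pos R \<rho>"
      using b PB unfolding angle_set_def angle_def by auto
    have "(e, m) \<in> re_pos R \<rho>" using b B_sub by auto
    then have "(e, m + 1) \<in> re_pos R \<rho>" unfolding re_pos_def by auto
    then have "(e, m + 1) \<in> B" using PB eP m0 unfolding angle_set_def angle_def aff_pos_def by auto
    moreover have "((e, m), (e, m + 1)) \<in> r" using P1[of 1 e m] b calculation by auto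
    ultimately have "((e, m + 1), (e, m)) \<in> r" "((e, m), (e, m + 1)) \<in> r" using mx by auto
    then have "(e, m) = (e, m + 1)" using antis by (meson antisymD)
    then show False by simp
  qed
  show ?thesis using part1 part2 part3 by blast
qed

end
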